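(* Let $k\ge1$ and $r\ge0$ be integers, and let $\mathcal{C}$ be a multiset of $2^k+r$ non-zero residues modulo $2^{k+1}$ such that no sub-collection sums to $2^k$ modulo $2^{k+1}$, and such that for no odd $\lambda$ can $\lambda\cdot\mathcal{C}$ be type 1 compressed. Then at least one of the following holds: $\mathcal{C}$ contains at least $2^{k-1}+r$ even residues; or there is an odd residue $t$ modulo $2^{k+1}$ such that $\mathcal{C}$ contains at least $2^{k-1}+r$ elements each lying in $\{t,-t,2^k-t,-(2^k-t)\}$; or there are three elements $x_1,x_2,x_3$ of $\mathcal{C}$ (three distinct members of the multiset) with $|\{x_1,x_2,x_3\}^*|\ge6$.
   Context: For a multiset $\mathcal{D}=\{a_1,\dots,a_d\}$ of residues modulo $2^{k+1}$, $\mathcal{D}^*=\{\sum_{i\in I}a_i \bmod 2^{k+1}: I\subseteq[d]\}$ (including $0$). $\lambda\cdot\mathcal{C}=\{\lambda c:c\in\mathcal{C}\}$. For a residue $t$, $|t|$ is the minimal absolute value of an integer in its residue class. A multiset $\mathcal{D}$ can be type 1 compressed if for some $\lambda>0$ it contains at least $\lambda$ elements each equal to $\pm1$ and also an element $t$ with $1<|t|\le\lambda+1$. *)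

theory Defs
  imports Main "HOL-Library.Multiset"
begin

text \<open>Residues modulo m are represented by integers; all notions below only depend
  on the residue classes modulo m.\<close>

definition absres :: "int \<Rightarrow> int \<Rightarrow> int" where
  "absres m t = min (t mod m) (m - t mod m)"

definition subsums :: "int \<Rightarrow> int multiset \<Rightarrow> int set" where
  "subsums m D = {sum_mset S mod m | S. S \<subseteq># D}"

definition scale_res :: "int \<Rightarrow> int \<Rightarrow> int multiset \<Rightarrow> int multiset" where
  "scale_res m l C = image_mset (\<lambda>c. (l * c) mod m) C"

definition type1_compressible :: "int \<Rightarrow> int multiset \<Rightarrow> bool" where
  "type1_compressible m D \<longleftrightarrow>
     (\<exists>l::nat. l > 0 \<and>
        l \<le> size (filter_mset (\<lambda>x. x mod m = 1 mod m \<or> x mod m = (-1) mod m) D) \<and>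
        (\<exists>t\<in>#D. 1 < absres m t \<and> absres m t \<le> int l + 1))"

end

theory Submission
  imports Defs
begin

lemma mod_lin:
  fixes x M :: int
  assumes "M > 0" "0 \<le> x" "x < 3*M"
  shows "x mod M = (if x<M then x else if x<2*M then x-M else x-2*M)"
proof -
  have e1: "M \<le> x \<Longrightarrow> x mod M = (x - M) mod M" using assms mod_pos_geq by blast
  have e2: "2*M \<le> x \<Longrightarrow> x mod M = (x - 2*M) mod M" using assms mod_pos_geq[of M x] mod_pos_geq[of M "x-M"] by simp
  show ?thesis
  proof (cases "x < M")
    case True then show ?thesis using assms by simp
  next
    case F1: False
    show ?thesis
    proof (cases "x < 2*M")
      case True
      have "x mod M = x - M" using e1 mod_pos_pos_trivial[of "x-M" M] F1 True by linarith
      then show ?thesis using F1 True by simp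
    next
      case False
      have "x mod M = x - 2*M" using e2 mod_pos_pos_trivial[of "x-2*M" M] F1 False assms by linarith
      then show ?thesis using F1 False by simp
    qed
  qed
qed

lemma neg_mod:
  fixes x M :: int
  assumes "0 < x" "x < M"
  shows "(-x) mod M = M - x"
proof -
  have "x mod M = x" using assms by simp
  thus ?thesis using assms by (simp add: zmod_zminus1_eq_if)
qed

lemma arith3_1:
  fixes a b c h ab ac bc abc a2 b2 :: int
  assumes h: "h > 0" "h mod 3 \<noteq> 0" "h mod 5 \<noteq> 0"
  and ra: "0<a" "a<2*h" and rb: "0<b" "b<2*h" and rc: "0<c" "c<2*h"
  and nh: "a\<noteq>h" "b\<noteq>h" "c\<noteq>h" "ab \<noteq> h" "ac \<noteq> h" "bc \<noteq> h" "abc \<noteq> h"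
  and ab: "b \<noteq> a" "b \<noteq> 2*h - a"
  and d: "ab = (if a+b < 2*h then a+b else a+b-2*h)"
         "ac = (if a+c < 2*h then a+c else a+c-2*h)"
         "bc = (if b+c < 2*h then b+c else b+c-2*h)"
         "abc = (if a+b+c < 2*h then a+b+c else if a+b+c < 4*h then a+b+c-2*h else a+b+c-4*h)"
         "a2 = (if 2*a < 2*h then 2*a else 2*a-2*h)"
         "b2 = (if 2*b < 2*h then 2*b else 2*b-2*h)"
  and m: "ac = 0 \<or> ac = a \<or> ac = b \<or> ac = ab" "bc = 0 \<or> bc = a \<or> bc = b \<or> bc = ab" "abc = 0 \<or> abc = a \<or> abc = b \<or> abc = ab"
  shows "((b = a2 \<or> b = 2*h - a2) \<and> (c = a \<or> c = 2*h - a)) \<or> ((a = b2 \<or> a = 2*h-b2) \<and> (c = b \<or> c = 2*h - b))"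
  using assms by (smt (verit))

lemma arith3_2:
  fixes a b c h ab ac bc abc a2 b2 :: int
  assumes h: "h > 0" "h mod 3 \<noteq> 0" "h mod 5 \<noteq> 0"
  and ra: "0<a" "a<2*h" and rb: "0<b" "b<2*h" and rc: "0<c" "c<2*h"
  and nh: "a\<noteq>h" "b\<noteq>h" "c\<noteq>h" "ab \<noteq> h" "ac \<noteq> h" "bc \<noteq> h" "abc \<noteq> h"
  and ab: "b \<noteq> a" "b \<noteq> 2*h - a"
  and d: "ab = (if a+b < 2*h then a+b else a+b-2*h)"
         "ac = (if a+c < 2*h then a+c else a+c-2*h)"
         "bc = (if b+c < 2*h then b+c else b+c-2*h)"
         "abc = (if a+b+c < 2*h then a+b+c else if a+b+c < 4*h then a+b+c-2*h else a+b+c-4*h)"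
         "a2 = (if 2*a < 2*h then 2*a else 2*a-2*h)"
         "b2 = (if 2*b < 2*h then 2*b else 2*b-2*h)"
  and m: "c = 0 \<or> c = a \<or> c = b \<or> c = ab" "bc = 0 \<or> bc = a \<or> bc = b \<or> bc = ab" "abc = 0 \<or> abc = a \<or> abc = b \<or> abc = ab"
  shows "((b = a2 \<or> b = 2*h - a2) \<and> (c = a \<or> c = 2*h - a)) \<or> ((a = b2 \<or> a = 2*h-b2) \<and> (c = b \<or> c = 2*h - b))"
  using assms by (smt (verit))

lemma arith3_3:
  fixes a b c h ab ac bc abc a2 b2 :: int
  assumes h: "h > 0" "h mod 3 \<noteq> 0" "h mod 5 \<noteq> 0"
  and ra: "0<a" "a<2*h" and rb: "0<b" "b<2*h" and rc: "0<c" "c<2*h"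
  and nh: "a\<noteq>h" "b\<noteq>h" "c\<noteq>h" "ab \<noteq> h" "ac \<noteq> h" "bc \<noteq> h" "abc \<noteq> h"
  and ab: "b \<noteq> a" "b \<noteq> 2*h - a"
  and d: "ab = (if a+b < 2*h then a+b else a+b-2*h)"
         "ac = (if a+c < 2*h then a+c else a+c-2*h)"
         "bc = (if b+c < 2*h then b+c else b+c-2*h)"
         "abc = (if a+b+c < 2*h then a+b+c else if a+b+c < 4*h then a+b+c-2*h else a+b+c-4*h)"
         "a2 = (if 2*a < 2*h then 2*a else 2*a-2*h)"
         "b2 = (if 2*b < 2*h then 2*b else 2*b-2*h)"
  and m: "c = 0 \<or> c = a \<or> c = b \<or> c = ab" "ac = 0 \<or> ac = a \<or> ac = b \<or> ac = ab" "abc = 0 \<or> abc = a \<or> abc = b \<or> abc = ab"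
  shows "((b = a2 \<or> b = 2*h - a2) \<and> (c = a \<or> c = 2*h - a)) \<or> ((a = b2 \<or> a = 2*h-b2) \<and> (c = b \<or> c = 2*h - b))"
  using assms by (smt (verit))

lemma arith3_4:
  fixes a b c h ab ac bc abc a2 b2 :: int
  assumes h: "h > 0" "h mod 3 \<noteq> 0" "h mod 5 \<noteq> 0"
  and ra: "0<a" "a<2*h" and rb: "0<b" "b<2*h" and rc: "0<c" "c<2*h"
  and nh: "a\<noteq>h" "b\<noteq>h" "c\<noteq>h" "ab \<noteq> h" "ac \<noteq> h" "bc \<noteq> h" "abc \<noteq> h"
  and ab: "b \<noteq> a" "b \<noteq> 2*h - a"
  and d: "ab = (if a+b < 2*h then a+b else a+b-2*h)"
         "ac = (if a+c < 2*h then a+c else a+c-2*h)"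
         "bc = (if b+c < 2*h then b+c else b+c-2*h)"
         "abc = (if a+b+c < 2*h then a+b+c else if a+b+c < 4*h then a+b+c-2*h else a+b+c-4*h)"
         "a2 = (if 2*a < 2*h then 2*a else 2*a-2*h)"
         "b2 = (if 2*b < 2*h then 2*b else 2*b-2*h)"
  and m: "c = 0 \<or> c = a \<or> c = b \<or> c = ab" "ac = 0 \<or> ac = a \<or> ac = b \<or> ac = ab" "bc = 0 \<or> bc = a \<or> bc = b \<or> bc = ab"
  shows "((b = a2 \<or> b = 2*h - a2) \<and> (c = a \<or> c = 2*h - a)) \<or> ((a = b2 \<or> a = 2*h-b2) \<and> (c = b \<or> c = 2*h - b))"
  using assms by (smt (verit))

lemma incompat:
  fixes a b h a2 b2 q3 q5 :: int
  assumes h: "h > 0" "h = 3*q3+1 \<or> h = 3*q3+2" "h = 5*q5+1 \<or> h = 5*q5+2 \<or> h = 5*q5+3 \<or> h = 5*q5+4"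
  and ra: "0<a" "a<2*h" and rb: "0<b" "b<2*h"
  and d: "a2 = (if 2*a < 2*h then 2*a else 2*a-2*h)"
         "b2 = (if 2*b < 2*h then 2*b else 2*b-2*h)"
  and e: "b = a2 \<or> b = 2*h - a2" "a = b2 \<or> a = 2*h-b2"
  shows False
proof -
  have "3*a = 2*h \<or> 3*a = 4*h \<or> 5*a = 2*h \<or> 5*a = 4*h \<or> 5*a = 6*h \<or> 5*a = 8*h"
    using ra rb d e by (cases "2*a < 2*h"; cases "2*b < 2*h"; auto)
  then show False using h by presburger
qed

lemma card6:
  fixes T :: "'a set"
  assumes "finite T" "set [p,q,r,s,u,v] \<subseteq> T" "distinct [p,q,r,s,u,v]"
  shows "6 \<le> card T"
proof -
  have "card (set [p,q,r,s,u,v]) = 6" using assms(3) distinct_card by fastforce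
  thus ?thesis using card_mono[OF assms(1,2)] by simp
qed

lemma card6':
  fixes T :: "'a set"
  assumes "finite T" "{p,q,r,s,u,v} \<subseteq> T" "distinct [p,q,r,s]" "u \<noteq> v" "u \<notin> {p,q,r,s}" "v \<notin> {p,q,r,s}"
  shows "6 \<le> card T"
  using card6[OF assms(1), of p q r s u v] assms by auto

lemma dbl_mod:
  fixes a h M :: int
  assumes "M = 2*h" "h > 0" "0 < a" "a < M" "a \<noteq> h"
  shows "(2*a) mod M = (if 2*a < 2*h then 2*a else 2*a-2*h)"
    "(-(2*a)) mod M = 2*h - (if 2*a < 2*h then 2*a else 2*a-2*h)"
proof -
  have Mp: "M > 0" using assms by simp
  show e: "(2*a) mod M = (if 2*a < 2*h then 2*a else 2*a-2*h)"
    using mod_lin[OF Mp, of "2*a"] assms by auto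
  have "(-(2*a)) mod M = (- ((2*a) mod M)) mod M" by (simp add: mod_minus_eq)
  also have "\<dots> = M - (if 2*a < 2*h then 2*a else 2*a-2*h)"
    using e neg_mod[of "(if 2*a < 2*h then 2*a else 2*a-2*h)" M] assms by auto
  finally show "(-(2*a)) mod M = 2*h - (if 2*a < 2*h then 2*a else 2*a-2*h)" using assms by simp
qed

lemma incompat_mod:
  fixes a b h M :: int
  assumes M: "M = 2*h" "h>0" "h mod 3 \<noteq> 0" "h mod 5 \<noteq> 0"
  and r: "0<a" "a<M" "0<b" "b<M" "a\<noteq>h" "b\<noteq>h"
  and "b = (2*a) mod M \<or> b = (-(2*a)) mod M" "a = (2*b) mod M \<or> a = (-(2*b)) mod M"
  shows False
proof -
  have q3: "h = 3*(h div 3) + 1 \<or> h = 3*(h div 3)+2" using M by presburger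
  have q5: "h = 5*(h div 5) + 1 \<or> h = 5*(h div 5)+2 \<or> h = 5*(h div 5)+3 \<or> h = 5*(h div 5)+4" using M by presburger
  show False
    apply (rule incompat[OF M(2) q3 q5, of a b "(if 2*a < 2*h then 2*a else 2*a-2*h)" "(if 2*b < 2*h then 2*b else 2*b-2*h)"])
    using r M assms(11,12) dbl_mod[OF M(1) M(2), of a] dbl_mod[OF M(1) M(2), of b] by simp_all
qed

lemma pow2_mod3: "(2::int)^k mod 3 \<noteq> 0"
proof -
  have "(2::int)^k mod 3 = 1 \<or> (2::int)^k mod 3 = 2"
  proof (induct k)
    case 0 then show ?case by simp
  next
    case (Suc k)
    have "(2::int)^Suc k mod 3 = (2 * ((2::int)^k mod 3)) mod 3" by (simp add: mod_mult_right_eq)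
    then show ?case using Suc by auto
  qed
  then show ?thesis by auto
qed

lemma pow2_mod5: "(2::int)^k mod 5 \<noteq> 0"
proof -
  have "(2::int)^k mod 5 = 1 \<or> (2::int)^k mod 5 = 2 \<or> (2::int)^k mod 5 = 3 \<or> (2::int)^k mod 5 = 4"
  proof (induct k)
    case 0 then show ?case by simp
  next
    case (Suc k)
    have "(2::int)^Suc k mod 5 = (2 * ((2::int)^k mod 5)) mod 5" by (simp add: mod_mult_right_eq)
    then show ?case using Suc by auto
  qed
  then show ?thesis by auto
qed

lemma in_subsums: "S \<subseteq># X \<Longrightarrow> sum_mset S mod m \<in> subsums m X"
  unfolding subsums_def by blast

lemma finite_subsums: "m > 0 \<Longrightarrow> finite (subsums m X)"
proof -
  assume "m > 0"
  then have "subsums m X \<subseteq> {0..<m}" unfolding subsums_def by auto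
  then show ?thesis using finite_subset by blast
qed

lemma filter_all: "(\<forall>z\<in>#B. P z) \<Longrightarrow> filter_mset P B = B"
  by (simp add: filter_mset_eq_conv)

lemma size_filter_ge:
  assumes "B \<subseteq># C" "\<forall>z\<in>#B. P z"
  shows "size B \<le> size (filter_mset P C)"
proof -
  have "filter_mset P B \<subseteq># filter_mset P C" using multiset_filter_mono[OF assms(1)] .
  then show ?thesis using filter_all[OF assms(2)] size_mset_mono by metis
qed

lemma tri:
  fixes a b c h M :: int
  assumes M: "M = 2*h" and h: "h>0" "h mod 3 \<noteq> 0" "h mod 5 \<noteq> 0"
  and r: "0<a" "a<M" "0<b" "b<M" "0<c" "c<M"
  and nh: "a \<noteq> h" "b\<noteq>h" "c\<noteq>h" "(a+b) mod M \<noteq> h" "(a+c) mod M \<noteq> h" "(b+c) mod M \<noteq> h" "(a+b+c) mod M \<noteq> h"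
  and ab: "b \<noteq> a" "b \<noteq> M - a"
  shows "6 \<le> card {0, a, b, c, (a+b) mod M, (a+c) mod M, (b+c) mod M, (a+b+c) mod M}
     \<or> ((b = (2*a) mod M \<or> b = (-(2*a)) mod M) \<and> (c = a \<or> c = M - a))
     \<or> ((a = (2*b) mod M \<or> a = (-(2*b)) mod M) \<and> (c = b \<or> c = M - b))"
proof -
  define ab where "ab = (if a+b < 2*h then a+b else a+b-2*h)"
  define ac where "ac = (if a+c < 2*h then a+c else a+c-2*h)"
  define bc where "bc = (if b+c < 2*h then b+c else b+c-2*h)"
  define abc where "abc = (if a+b+c < 2*h then a+b+c else if a+b+c < 4*h then a+b+c-2*h else a+b+c-4*h)"
  define a2 where "a2 = (if 2*a < 2*h then 2*a else 2*a-2*h)"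
  define b2 where "b2 = (if 2*b < 2*h then 2*b else 2*b-2*h)"
  have Mp: "M > 0" using M h by simp
  have eab: "(a+b) mod M = ab" using mod_lin[OF Mp, of "a+b"] r M unfolding ab_def by auto
  have eac: "(a+c) mod M = ac" using mod_lin[OF Mp, of "a+c"] r M unfolding ac_def by auto
  have ebc: "(b+c) mod M = bc" using mod_lin[OF Mp, of "b+c"] r M unfolding bc_def by auto
  have eabc: "(a+b+c) mod M = abc" using mod_lin[OF Mp, of "a+b+c"] r M unfolding abc_def by auto
  have ea2: "(2*a) mod M = a2" using mod_lin[OF Mp, of "2*a"] r M unfolding a2_def by auto
  have eb2: "(2*b) mod M = b2" using mod_lin[OF Mp, of "2*b"] r M unfolding b2_def by auto
  have ea2': "(-(2*a)) mod M = M - a2"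
  proof -
    have "(-(2*a)) mod M = (- ((2*a) mod M)) mod M" by (simp add: mod_minus_eq)
    also have "\<dots> = M - a2" using ea2 neg_mod[of a2 M] nh r M unfolding a2_def by auto
    finally show ?thesis .
  qed
  have eb2': "(-(2*b)) mod M = M - b2"
  proof -
    have "(-(2*b)) mod M = (- ((2*b) mod M)) mod M" by (simp add: mod_minus_eq)
    also have "\<dots> = M - b2" using eb2 neg_mod[of b2 M] nh r M unfolding b2_def by auto
    finally show ?thesis .
  qed
  define P where "P = (\<lambda>u. u = 0 \<or> u = a \<or> u = b \<or> u = ab)"
  have D0: "distinct [0,a,b,ab]" using r ab M unfolding ab_def by auto
  have Dc: "distinct [c,ac,bc,abc]"
    unfolding distinct.simps list.set insert_iff empty_iff de_Morgan_disj simp_thms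
    using r ab M unfolding ac_def bc_def abc_def by smt
  have fin: "finite {0, a, b, c, ab, ac, bc, abc}" by simp
  show ?thesis
  proof (cases "(P c \<and> P ac \<and> P bc) \<or> (P c \<and> P ac \<and> P abc) \<or> (P c \<and> P bc \<and> P abc) \<or> (P ac \<and> P bc \<and> P abc)")
    case True
    have r2: "a < 2*h" "b < 2*h" "c < 2*h" using r M by auto
    have ab2: "b \<noteq> 2*h - a" using ab M by simp
    have nh2: "ab \<noteq> h" "ac \<noteq> h" "bc \<noteq> h" "abc \<noteq> h" using nh eab eac ebc eabc by auto
    have "((b = a2 \<or> b = 2*h - a2) \<and> (c = a \<or> c = 2*h - a)) \<or> ((a = b2 \<or> a = 2*h-b2) \<and> (c = b \<or> c = 2*h - b))"
      using True
      apply (elim disjE conjE)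
         apply (rule arith3_4[OF h(1) h(2) h(3) r(1) r2(1) r(3) r2(2) r(5) r2(3) nh(1) nh(2) nh(3) nh2 ab(1) ab2 ab_def ac_def bc_def abc_def a2_def b2_def]; unfold P_def; assumption)
        apply (rule arith3_3[OF h(1) h(2) h(3) r(1) r2(1) r(3) r2(2) r(5) r2(3) nh(1) nh(2) nh(3) nh2 ab(1) ab2 ab_def ac_def bc_def abc_def a2_def b2_def]; unfold P_def; assumption)
       apply (rule arith3_2[OF h(1) h(2) h(3) r(1) r2(1) r(3) r2(2) r(5) r2(3) nh(1) nh(2) nh(3) nh2 ab(1) ab2 ab_def ac_def bc_def abc_def a2_def b2_def]; unfold P_def; assumption)
      apply (rule arith3_1[OF h(1) h(2) h(3) r(1) r2(1) r(3) r2(2) r(5) r2(3) nh(1) nh(2) nh(3) nh2 ab(1) ab2 ab_def ac_def bc_def abc_def a2_def b2_def]; unfold P_def; assumption)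
      done
    moreover have "(b = (2*a) mod M \<or> b = (-(2*a)) mod M) = (b = a2 \<or> b = 2*h - a2)"
      using ea2 ea2' M by simp
    moreover have "(a = (2*b) mod M \<or> a = (-(2*b)) mod M) = (a = b2 \<or> a = 2*h - b2)"
      using eb2 eb2' M by simp
    ultimately show ?thesis using M by auto
  next
    case False
    have c6: "6 \<le> card {0, a, b, c, ab, ac, bc, abc}"
      if "u \<in> {c,ac,bc,abc}" "v \<in> {c,ac,bc,abc}" "u \<noteq> v" "\<not> P u" "\<not> P v" for u v
    proof -
      have "u \<notin> {0,a,b,ab}" "v \<notin> {0,a,b,ab}" using that(4,5) unfolding P_def by simp_all
      moreover have "{0,a,b,ab,u,v} \<subseteq> {0, a, b, c, ab, ac, bc, abc}" using that(1,2) by blast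
      ultimately show ?thesis using card6'[OF fin _ D0 that(3)] by blast
    qed
    have dc: "c \<noteq> ac" "c \<noteq> bc" "c \<noteq> abc" "ac \<noteq> bc" "ac \<noteq> abc" "bc \<noteq> abc" using Dc by auto
    have "6 \<le> card {0, a, b, c, ab, ac, bc, abc}"
    proof (cases "P c")
      case Pc: True
      show ?thesis
      proof (cases "P ac")
        case True
        then have "\<not> P bc" "\<not> P abc" using False Pc by auto
        then show ?thesis using c6[of bc abc] dc by auto
      next
        case Fac: False
        show ?thesis
        proof (cases "P bc")
          case True
          then have "\<not> P abc" using False Pc by auto
          then show ?thesis using c6[of ac abc] dc Fac by auto
        next
          case False
          then show ?thesis using c6[of ac bc] dc Fac by auto
        qed
      qed
    next
      case Fc: False
      show ?thesis
      proof (cases "P ac")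
        case True
        show ?thesis
        proof (cases "P bc")
          case True
          then have "\<not> P abc" using False \<open>P ac\<close> by auto
          then show ?thesis using c6[of c abc] dc Fc by auto
        next
          case False
          then show ?thesis using c6[of c bc] dc Fc by auto
        qed
      next
        case False
        then show ?thesis using c6[of c ac] dc Fc by auto
      qed
    qed
    then show ?thesis using eab eac ebc eabc by simp
  qed
qed

theorem lemma3p8:
  fixes k r :: nat and C :: "int multiset"
  defines "M \<equiv> (2::int) ^ (k + 1)"
  assumes k: "k \<ge> 1"
    and size_C: "size C = 2 ^ k + r"
    and nonzero: "\<forall>x\<in>#C. 0 < x \<and> x < M"
    and no_half: "\<forall>S. S \<subseteq># C \<longrightarrow> sum_mset S mod M \<noteq> 2 ^ k"
    and no_compress: "\<forall>l::int. odd l \<longrightarrow> \<not> type1_compressible M (scale_res M l C)"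
  shows "size (filter_mset even C) \<ge> 2 ^ (k - 1) + r
       \<or> (\<exists>t::int. odd t \<and>
            size (filter_mset (\<lambda>x. x mod M \<in> {t mod M, (-t) mod M, (2^k - t) mod M,
                                               (-(2^k - t)) mod M}) C) \<ge> 2 ^ (k - 1) + r)
       \<or> (\<exists>X. X \<subseteq># C \<and> size X = 3 \<and> card (subsums M X) \<ge> 6)"
proof -
  define h :: int where "h = 2^k"
  have Mh: "M = 2*h" unfolding M_def h_def by simp
  have hpos: "h > 0" unfolding h_def by simp
  have h3: "h mod 3 \<noteq> 0" unfolding h_def by (rule pow2_mod3)
  have h5: "h mod 5 \<noteq> 0" unfolding h_def by (rule pow2_mod5)
  have Mpos: "M > 0" using Mh hpos by simp
  have nh: "\<And>S. S \<subseteq># C \<Longrightarrow> sum_mset S mod M \<noteq> h" using no_half unfolding h_def by auto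
  have el: "\<And>x. x \<in># C \<Longrightarrow> 0 < x \<and> x < M" using nonzero by auto
  have elh: "\<And>x. x \<in># C \<Longrightarrow> x \<noteq> h"
  proof -
    fix x assume x: "x \<in># C"
    have "{#x#} \<subseteq># C" using x by simp
    then have "sum_mset {#x#} mod M \<noteq> h" by (rule nh)
    then show "x \<noteq> h" using el[OF x] by simp
  qed
  have need: "size C - 1 \<ge> 2 ^ (k - 1) + r"
  proof -
    have "(2::nat) ^ k = 2 * 2 ^ (k - 1)" using k by (metis Suc_diff_1 less_le_trans power_Suc zero_less_one)
    moreover have "(2::nat) ^ (k-1) \<ge> 1" by simp
    ultimately show ?thesis using size_C by linarith
  qed
  define Pt where "Pt = (\<lambda>t x. x mod M \<in> {t mod M, (-t) mod M, (2^k - t) mod M, (-(2^k - t)) mod M})"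
  have finish: "size (filter_mset even C) \<ge> 2 ^ (k - 1) + r
       \<or> (\<exists>t::int. odd t \<and> size (filter_mset (Pt t) C) \<ge> 2 ^ (k - 1) + r)"
    if w: "w \<in># C" and B: "B \<subseteq># C" "size B + 1 \<ge> size C" "\<forall>z\<in>#B. z = w \<or> z = M - w" for w B
  proof (cases "odd w")
    case True
    have "\<forall>z\<in>#B. Pt w z"
    proof
      fix z assume "z \<in># B"
      then have "z = w \<or> z = M - w" using B by auto
      moreover have "(M - w) mod M = (-w) mod M" by (metis add.commute diff_conv_add_uminus mod_add_self1)
      ultimately show "Pt w z" unfolding Pt_def by auto
    qed
    then have "size B \<le> size (filter_mset (Pt w) C)" using size_filter_ge[OF B(1)] by blast
    then show ?thesis using True B(2) need by (intro disjI2 exI[of _ w]) auto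
  next
    case False
    have Me: "even M" using Mh by simp
    have "\<forall>z\<in>#B. even z"
    proof
      fix z assume "z \<in># B"
      then have "z = w \<or> z = M - w" using B by auto
      then show "even z" using False Me by auto
    qed
    then have "size B \<le> size (filter_mset even C)" using size_filter_ge[OF B(1)] by blast
    then show ?thesis using B(2) need by (intro disjI1) auto
  qed
  have key: "size (filter_mset even C) \<ge> 2 ^ (k - 1) + r
       \<or> (\<exists>t::int. odd t \<and> size (filter_mset (Pt t) C) \<ge> 2 ^ (k - 1) + r)"
    if H3: "\<forall>X. X \<subseteq># C \<and> size X = 3 \<longrightarrow> card (subsums M X) < 6"
  proof -
    have tr: "((y = (2*x) mod M \<or> y = (-(2*x)) mod M) \<and> (z = x \<or> z = M - x))
       \<or> ((x = (2*y) mod M \<or> x = (-(2*y)) mod M) \<and> (z = y \<or> z = M - y))"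
      if sub: "{#x,y,z#} \<subseteq># C" and xy: "y \<noteq> x" "y \<noteq> M - x" for x y z
    proof -
      have ex: "x \<in># C" "y \<in># C" "z \<in># C" using sub by (auto dest: mset_subset_eqD)
      have sb: "\<And>S. S \<subseteq># {#x,y,z#} \<Longrightarrow> sum_mset S mod M \<noteq> h"
        using sub nh subset_mset.order_trans by blast
      have m1: "x mod M = x" "y mod M = y" "z mod M = z" using el[OF ex(1)] el[OF ex(2)] el[OF ex(3)] by simp_all
      have n1: "(x+y) mod M \<noteq> h" using sb[of "{#x,y#}"] by simp
      have n2: "(x+z) mod M \<noteq> h" using sb[of "{#x,z#}"] by (simp add: subset_mset.le_iff_add)
      have n3: "(y+z) mod M \<noteq> h" using sb[of "{#y,z#}"] by (simp add: subset_mset.le_iff_add)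
      have n4: "(x+y+z) mod M \<noteq> h" using sb[of "{#x,y,z#}"] by (simp add: add.assoc)
      have S: "{0, x, y, z, (x+y) mod M, (x+z) mod M, (y+z) mod M, (x+y+z) mod M} \<subseteq> subsums M {#x,y,z#}"
      proof -
        have "sum_mset {#} mod M \<in> subsums M {#x,y,z#}" by (rule in_subsums) simp
        moreover have "sum_mset {#x#} mod M \<in> subsums M {#x,y,z#}" by (rule in_subsums) simp
        moreover have "sum_mset {#y#} mod M \<in> subsums M {#x,y,z#}" by (rule in_subsums) simp
        moreover have "sum_mset {#z#} mod M \<in> subsums M {#x,y,z#}" by (rule in_subsums) simp
        moreover have "sum_mset {#x,y#} mod M \<in> subsums M {#x,y,z#}" by (rule in_subsums) simp
        moreover have "sum_mset {#x,z#} mod M \<in> subsums M {#x,y,z#}" by (rule in_subsums) (simp add: subset_mset.le_iff_add)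
        moreover have "sum_mset {#y,z#} mod M \<in> subsums M {#x,y,z#}" by (rule in_subsums) (simp add: subset_mset.le_iff_add)
        moreover have "sum_mset {#x,y,z#} mod M \<in> subsums M {#x,y,z#}" by (rule in_subsums) simp
        ultimately show ?thesis using m1 by (simp add: add.assoc add.left_commute add.commute)
      qed
      have "card (subsums M {#x,y,z#}) < 6" using H3 sub by auto
      then have c: "\<not> 6 \<le> card {0, x, y, z, (x+y) mod M, (x+z) mod M, (y+z) mod M, (x+y+z) mod M}"
        using card_mono[OF finite_subsums[OF Mpos] S] by linarith
      show ?thesis
        using tri[OF Mh hpos h3 h5 _ _ _ _ _ _ elh[OF ex(1)] elh[OF ex(2)] elh[OF ex(3)] n1 n2 n3 n4 xy] el ex c
        by blast
    qed
    obtain x where x: "x \<in># C" using size_C by (metis size_empty add_is_0 power_not_zero zero_neq_numeral multiset_nonemptyE)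
    define D where "D = C - {#x#}"
    have CD: "C = add_mset x D" unfolding D_def using x by simp
    show ?thesis
    proof (cases "\<forall>y\<in>#D. y = x \<or> y = M - x")
      case True
      then show ?thesis using finish[OF x, of C] CD by auto
    next
      case False
      then obtain y where y: "y \<in># D" "y \<noteq> x" "y \<noteq> M - x" by blast
      define E where "E = D - {#y#}"
      have CE: "C = add_mset x (add_mset y E)" unfolding E_def using y CD by simp
      have szE: "size C = size E + 2" using CE by simp
      have trz: "\<And>z. z \<in># E \<Longrightarrow> ((y = (2*x) mod M \<or> y = (-(2*x)) mod M) \<and> (z = x \<or> z = M - x))
       \<or> ((x = (2*y) mod M \<or> x = (-(2*y)) mod M) \<and> (z = y \<or> z = M - y))"
      proof -
        fix z assume z: "z \<in># E"
        have "{#x,y,z#} \<subseteq># C" unfolding CE using z by (simp add: mset_subset_eq_single)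
        then show "?thesis z" using tr y by blast
      qed
      have xC: "x \<in># C" "y \<in># C" using CE by auto
      show ?thesis
      proof (cases "y = (2*x) mod M \<or> y = (-(2*x)) mod M")
        case Y2: True
        have nX2: "\<not> (x = (2*y) mod M \<or> x = (-(2*y)) mod M)"
          using incompat_mod[OF Mh hpos h3 h5, of x y] el[OF xC(1)] el[OF xC(2)] elh[OF xC(1)] elh[OF xC(2)] Y2 by blast
        have "\<forall>z\<in>#add_mset x E. z = x \<or> z = M - x" using trz nX2 by auto
        moreover have "add_mset x E \<subseteq># C" unfolding CE by simp
        ultimately show ?thesis using finish[OF xC(1), of "add_mset x E"] szE by simp
      next
        case nY2: False
        show ?thesis
        proof (cases "x = (2*y) mod M \<or> x = (-(2*y)) mod M")
          case True
          have "\<forall>z\<in>#add_mset y E. z = y \<or> z = M - y" using trz nY2 by auto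
          moreover have "add_mset y E \<subseteq># C" unfolding CE by simp
          ultimately show ?thesis using finish[OF xC(2), of "add_mset y E"] szE by simp
        next
          case False
          have "E = {#}" using trz nY2 False by (metis multiset_nonemptyE)
          then show ?thesis using finish[OF xC(1), of "{#x#}"] szE x by simp
        qed
      qed
    qed
  qed
  show ?thesis
  proof (cases "\<exists>X. X \<subseteq># C \<and> size X = 3 \<and> card (subsums M X) \<ge> 6")
    case True then show ?thesis by blast
  next
    case False
    then have "\<forall>X. X \<subseteq># C \<and> size X = 3 \<longrightarrow> card (subsums M X) < 6" by auto
    from key[OF this] show ?thesis unfolding Pt_def by blast
  qed
qed

end
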